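(* Let $\Omega\in\mathscr A$ with $\mathfrak m(\Omega)<+\infty$ and for $\kappa>0$ let $\mathcal J_\kappa[F]:=P(F)-\kappa\,\mathfrak m(F)$ for measurable $F\subset\Omega$. If (P.4) and (P.5) hold, then $\mathcal J_\kappa$ admits a minimizer among measurable subsets of $\Omega$. If in addition (P.1) holds, then: (i) if $\mathcal J_\kappa$ has a minimizer $E$ with $\mathfrak m(E)>0$, then $\Omega$ is $1$-admissible and $\kappa\ge h_1(\Omega)$; (ii) if $\Omega$ is $1$-admissible and $\kappa>h_1(\Omega)$, then $\mathcal J_\kappa$ has a minimizer with positive $\mathfrak m$-measure; (iii) if $\Omega$ has a $1$-Cheeger set, then $\mathcal J_\kappa$ has a minimizer with positive $\mathfrak m$-measure if and only if $\kappa\ge h_1(\Omega)$.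
   Context: $(X,\mathscr A,\mathfrak m)$ is a non-negative $\sigma$-finite measure space; for $A,B\in\mathscr A$, "$A\subset B$" means $\mathfrak m(A\setminus B)=0$. $P\colon\mathscr A\to[0,+\infty]$ is a proper functional. (P.1): $P(\emptyset)=0$. (P.4): if $\chi_{E_k}\to\chi_E$ in $L^1(X,\mathfrak m)$ then $P(E)\le\liminf_k P(E_k)$. (P.5): for every $c\ge0$, $\{\chi_E:E\in\mathscr A,\ P(E)\le c\}$ is compact in $L^1(X,\mathfrak m)$. $\Omega$ is $1$-admissible if it contains some $E$ with $0<\mathfrak m(E)<+\infty$, $P(E)<+\infty$; $h_1(\Omega)=\inf\{P(E)/\mathfrak m(E): E\subset\Omega,\ 0<\mathfrak m(E)<+\infty,\ P(E)<+\infty\}$; a set attaining it is a $1$-Cheeger set of $\Omega$. *)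

theory Defs
  imports "HOL-Analysis.Analysis"
begin

definition ae_subset :: "'a measure \<Rightarrow> 'a set \<Rightarrow> 'a set \<Rightarrow> bool" where
  "ae_subset M A B \<longleftrightarrow> emeasure M (A - B) = 0"

definition L1_dist_ind :: "'a measure \<Rightarrow> 'a set \<Rightarrow> 'a set \<Rightarrow> ennreal" where
  "L1_dist_ind M A B = (\<integral>\<^sup>+ x. ennreal \<bar>(indicator A x :: real) - indicator B x\<bar> \<partial>M)"

definition ind_L1_conv :: "'a measure \<Rightarrow> (nat \<Rightarrow> 'a set) \<Rightarrow> 'a set \<Rightarrow> bool" where
  "ind_L1_conv M Es E \<longleftrightarrow>
     E \<in> sets M \<and> emeasure M E < \<infinity> \<and>
     (\<forall>k. Es k \<in> sets M \<and> emeasure M (Es k) < \<infinity>) \<and>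
     ((\<lambda>k. L1_dist_ind M (Es k) E) \<longlonglongrightarrow> 0)"

definition P1 :: "('a set \<Rightarrow> ennreal) \<Rightarrow> bool" where
  "P1 P \<longleftrightarrow> P {} = 0"

definition P4 :: "'a measure \<Rightarrow> ('a set \<Rightarrow> ennreal) \<Rightarrow> bool" where
  "P4 M P \<longleftrightarrow> (\<forall>Es E. ind_L1_conv M Es E \<longrightarrow> P E \<le> liminf (\<lambda>k. P (Es k)))"

text \<open>(P.5): compactness in L^1 (a metric space), stated as sequential compactness of
  the set of characteristic functions chi_E (E measurable, chi_E in L^1) with P(E) \<le> c.\<close>
definition P5 :: "'a measure \<Rightarrow> ('a set \<Rightarrow> ennreal) \<Rightarrow> bool" where
  "P5 M P \<longleftrightarrow> (\<forall>(c::real) (Es :: nat \<Rightarrow> 'a set). c \<ge> 0 \<longrightarrow>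
      (\<forall>k. Es k \<in> sets M \<and> emeasure M (Es k) < \<infinity> \<and> P (Es k) \<le> ennreal c) \<longrightarrow>
      (\<exists>(r :: nat \<Rightarrow> nat) E. strict_mono r \<and> P E \<le> ennreal c \<and> ind_L1_conv M (Es \<circ> r) E))"

definition proper_functional :: "('a set \<Rightarrow> ennreal) \<Rightarrow> bool" where
  "proper_functional P \<longleftrightarrow> (\<exists>E. P E < \<infinity>)"

definition admissible_set :: "'a measure \<Rightarrow> ('a set \<Rightarrow> ennreal) \<Rightarrow> 'a set \<Rightarrow> 'a set \<Rightarrow> bool" where
  "admissible_set M P \<Omega> E \<longleftrightarrow> E \<in> sets M \<and> ae_subset M E \<Omega> \<and>
     0 < emeasure M E \<and> emeasure M E < \<infinity> \<and> P E < \<infinity>"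

definition one_admissible :: "'a measure \<Rightarrow> ('a set \<Rightarrow> ennreal) \<Rightarrow> 'a set \<Rightarrow> bool" where
  "one_admissible M P \<Omega> \<longleftrightarrow> (\<exists>E. admissible_set M P \<Omega> E)"

definition h1 :: "'a measure \<Rightarrow> ('a set \<Rightarrow> ennreal) \<Rightarrow> 'a set \<Rightarrow> real" where
  "h1 M P \<Omega> = Inf {enn2real (P E) / measure M E | E. admissible_set M P \<Omega> E}"

definition cheeger_set :: "'a measure \<Rightarrow> ('a set \<Rightarrow> ennreal) \<Rightarrow> 'a set \<Rightarrow> 'a set \<Rightarrow> bool" where
  "cheeger_set M P \<Omega> E \<longleftrightarrow> admissible_set M P \<Omega> E \<and>
     enn2real (P E) / measure M E = h1 M P \<Omega>"

definition Jk :: "'a measure \<Rightarrow> ('a set \<Rightarrow> ennreal) \<Rightarrow> real \<Rightarrow> 'a set \<Rightarrow> ereal" where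
  "Jk M P \<kappa> F = enn2ereal (P F) - ereal (\<kappa> * measure M F)"

definition Jk_minimizer :: "'a measure \<Rightarrow> ('a set \<Rightarrow> ennreal) \<Rightarrow> real \<Rightarrow> 'a set \<Rightarrow> 'a set \<Rightarrow> bool" where
  "Jk_minimizer M P \<kappa> \<Omega> E \<longleftrightarrow> E \<in> sets M \<and> ae_subset M E \<Omega> \<and>
     (\<forall>F. F \<in> sets M \<and> ae_subset M F \<Omega> \<longrightarrow> Jk M P \<kappa> E \<le> Jk M P \<kappa> F)"

end

theory Submission
  imports Defs
begin

lemma L1_eq:
  assumes "A \<in> sets M" "B \<in> sets M"
  shows "L1_dist_ind M A B = emeasure M ((A - B) \<union> (B - A))"
proof -
  have "\<And>x. ennreal \<bar>(indicator A x :: real) - indicator B x\<bar> = indicator ((A - B) \<union> (B - A)) x"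
    by (auto simp: indicator_def)
  then show ?thesis unfolding L1_dist_ind_def using assms by simp
qed

lemma ae_sub_le:
  assumes "F \<in> sets M" "\<Omega> \<in> sets M" "ae_subset M F \<Omega>"
  shows "emeasure M F \<le> emeasure M \<Omega>"
proof -
  have "F - \<Omega> \<in> null_sets M" using assms by (auto simp: ae_subset_def null_sets_def)
  then have "emeasure M (F - (F - \<Omega>)) = emeasure M F" using assms emeasure_Diff_null_set by blast
  moreover have "F - (F - \<Omega>) = F \<inter> \<Omega>" by auto
  moreover have "emeasure M (F \<inter> \<Omega>) \<le> emeasure M \<Omega>" using assms by (intro emeasure_mono) auto
  ultimately show ?thesis by simp
qed

lemma Jk_fin:
  assumes "P F \<noteq> top"
  shows "Jk M P k F = ereal (enn2real (P F) - k * measure M F)"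
proof -
  have "P F = ennreal (enn2real (P F))" using assms ennreal_enn2real[of "P F"] by (simp add: less_top)
  then have "enn2ereal (P F) = ereal (enn2real (P F))"
    by (metis enn2ereal_ennreal enn2real_nonneg)
  then show ?thesis unfolding Jk_def by simp
qed

lemma Jk_inf:
  assumes "P F = top"
  shows "Jk M P k F = \<infinity>"
  using assms unfolding Jk_def by simp

lemma exists_min:
  assumes Om: "\<Omega> \<in> sets M" "emeasure M \<Omega> < \<infinity>" and kp: "\<kappa> > 0"
    and p4: "P4 M P" and p5: "P5 M P"
  shows "\<exists>E. Jk_minimizer M P \<kappa> \<Omega> E"
proof -
  define S where "S = {F. F \<in> sets M \<and> ae_subset M F \<Omega>}"
  define T where "T = {F\<in>S. P F \<noteq> top}"
  define j where "j F = enn2real (P F) - \<kappa> * measure M F" for F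
  have Sfin: "emeasure M F < \<infinity>" if "F \<in> S" for F
    using ae_sub_le[of F M \<Omega>] that Om unfolding S_def by auto
  have Smu: "measure M F \<le> measure M \<Omega>" if "F \<in> S" for F
    using ae_sub_le[of F M \<Omega>] that Om unfolding S_def measure_def
    by (intro enn2real_mono) auto
  have crit: "Jk_minimizer M P \<kappa> \<Omega> E" if ET: "E \<in> T" and le: "\<forall>F\<in>T. j E \<le> j F" for E
  proof -
    have "Jk M P \<kappa> E \<le> Jk M P \<kappa> F" if "F \<in> S" for F
    proof (cases "P F = top")
      case True then show ?thesis by (simp add: Jk_inf)
    next
      case False
      then have "F \<in> T" using that T_def by auto
      then show ?thesis using le ET False unfolding T_def j_def by (auto simp: Jk_fin)
    qed
    then show ?thesis using ET unfolding Jk_minimizer_def T_def S_def by auto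
  qed
  show ?thesis
  proof (cases "T = {}")
    case True
    have "\<Omega> \<in> S" using Om unfolding S_def ae_subset_def by auto
    moreover have "Jk M P \<kappa> \<Omega> \<le> Jk M P \<kappa> F" if "F \<in> S" for F
      using True that unfolding T_def by (auto simp: Jk_inf)
    ultimately show ?thesis unfolding Jk_minimizer_def S_def by auto
  next
    case False
    have lb: "- \<kappa> * measure M \<Omega> \<le> j F" if "F \<in> T" for F
    proof -
      have "measure M F \<le> measure M \<Omega>" using Smu that T_def by auto
      then have "\<kappa> * measure M F \<le> \<kappa> * measure M \<Omega>" using kp by simp
      then show ?thesis unfolding j_def using enn2real_nonneg[of "P F"] by linarith
    qed
    define m where "m = Inf (j ` T)"
    have bdd: "bdd_below (j ` T)" using lb by (intro bdd_belowI2) 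
    have mle: "m \<le> j F" if "F \<in> T" for F
      unfolding m_def using bdd that by (intro cInf_lower) auto
    have mge: "- \<kappa> * measure M \<Omega> \<le> m"
      unfolding m_def using False lb by (intro cInf_greatest) auto
    have "\<forall>k::nat. \<exists>F\<in>T. j F < m + 1 / real (Suc k)"
    proof
      fix k :: nat
      have "m < m + 1 / real (Suc k)" by simp
      then have "\<exists>x\<in>j ` T. x < m + 1 / real (Suc k)"
        unfolding m_def using False by (intro cInf_lessD) auto
      then show "\<exists>F\<in>T. j F < m + 1 / real (Suc k)" by auto
    qed
    then obtain G where G: "\<And>k. G k \<in> T" "\<And>k. j (G k) < m + 1 / real (Suc k)"
      by metis
    define c where "c = m + 1 + \<kappa> * measure M \<Omega>"
    have c0: "c \<ge> 0" using mge unfolding c_def by simp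
    have GP: "P (G k) = ennreal (enn2real (P (G k)))" for k
      using G(1)[of k] ennreal_enn2real[of "P (G k)"] unfolding T_def by (simp add: less_top)
    have Gc: "P (G k) \<le> ennreal c" for k
    proof -
      have "1 / real (Suc k) \<le> 1" by simp
      moreover have "measure M (G k) \<le> measure M \<Omega>" using Smu G(1)[of k] T_def by auto
      then have "\<kappa> * measure M (G k) \<le> \<kappa> * measure M \<Omega>" using kp by simp
      ultimately have "enn2real (P (G k)) \<le> c" using G(2)[of k] unfolding j_def c_def by linarith
      then show ?thesis by (subst GP) (rule ennreal_leI)
    qed
    have Gs: "G k \<in> sets M \<and> emeasure M (G k) < \<infinity> \<and> P (G k) \<le> ennreal c" for k
      using G(1)[of k] Sfin[of "G k"] Gc[of k] unfolding T_def S_def by auto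
    from p5 c0 Gs obtain r E where r: "strict_mono r" and PE: "P E \<le> ennreal c"
      and conv: "ind_L1_conv M (G \<circ> r) E"
      unfolding P5_def by blast
    define H where "H = G \<circ> r"
    have Es: "E \<in> sets M" and Efin: "emeasure M E < \<infinity>"
      and L1: "(\<lambda>k. L1_dist_ind M (H k) E) \<longlonglongrightarrow> 0"
      using conv unfolding ind_L1_conv_def H_def by auto
    have HT: "H k \<in> T" for k using G(1) unfolding H_def by simp
    have Hs: "H k \<in> sets M" for k using HT unfolding T_def S_def by auto
    have Hfin: "emeasure M (H k) < \<infinity>" for k using HT Sfin unfolding T_def by auto
    define D where "D k = (H k - E) \<union> (E - H k)" for k
    have Ds: "D k \<in> sets M" for k using Hs Es unfolding D_def by auto
    have Dfin: "emeasure M (D k) < \<infinity>" for k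
    proof -
      have "emeasure M (D k) \<le> emeasure M (H k \<union> E)" unfolding D_def
        using Hs Es by (intro emeasure_mono) auto
      also have "\<dots> \<le> emeasure M (H k) + emeasure M E" using Hs Es by (intro emeasure_subadditive) auto
      also have "\<dots> < \<infinity>" using Hfin Efin by (simp add: less_top)
      finally show ?thesis .
    qed
    have Dlim: "(\<lambda>k. emeasure M (D k)) \<longlonglongrightarrow> 0"
      using L1 unfolding D_def by (simp add: L1_eq[OF Hs Es])
    have aeE: "emeasure M (E - \<Omega>) \<le> emeasure M (D k)" for k
    proof -
      have "emeasure M (E - \<Omega>) \<le> emeasure M ((E - H k) \<union> (H k - \<Omega>))"
        using Es Hs Om by (intro emeasure_mono) auto
      also have "\<dots> \<le> emeasure M (E - H k) + emeasure M (H k - \<Omega>)"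
        using Es Hs Om by (intro emeasure_subadditive) auto
      also have "emeasure M (H k - \<Omega>) = 0" using HT unfolding T_def S_def ae_subset_def by auto
      also have "emeasure M (E - H k) \<le> emeasure M (D k)" unfolding D_def
        using Ds D_def by (intro emeasure_mono) auto
      finally show ?thesis by simp
    qed
    have "emeasure M (E - \<Omega>) \<le> 0"
      using Dlim aeE by (intro LIMSEQ_le_const) auto
    then have Eae: "ae_subset M E \<Omega>" unfolding ae_subset_def by simp
    have Dmu: "(\<lambda>k. measure M (D k)) \<longlonglongrightarrow> 0"
      using tendsto_enn2real[of "\<lambda>k. emeasure M (D k)" 0 sequentially] Dlim
      unfolding measure_def by simp
    have muD: "\<bar>measure M (H k) - measure M E\<bar> \<le> measure M (D k)" for k
    proof -
      have s1: "H k \<subseteq> E \<union> D k" unfolding D_def by blast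
      have "measure M (H k) \<le> measure M (E \<union> D k)"
        using Hs Es Ds Efin Dfin s1
        by (intro measure_mono_fmeasurable fmeasurable.Un fmeasurableI) simp_all
      also have "\<dots> \<le> measure M E + measure M (D k)"
        using Es Ds Efin Dfin[of k] by (intro measure_subadditive) auto
      finally have 1: "measure M (H k) \<le> measure M E + measure M (D k)" .
      have s2: "E \<subseteq> H k \<union> D k" unfolding D_def by blast
      have "measure M E \<le> measure M (H k \<union> D k)"
        using Hs Es Ds Hfin Dfin s2
        by (intro measure_mono_fmeasurable fmeasurable.Un fmeasurableI) simp_all
      also have "\<dots> \<le> measure M (H k) + measure M (D k)"
        using Hs Ds Hfin[of k] Dfin[of k] by (intro measure_subadditive) auto
      finally show ?thesis using 1 by linarith
    qed
    have muH: "(\<lambda>k. measure M (H k)) \<longlonglongrightarrow> measure M E"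
    proof (rule LIM_zero_cancel)
      show "(\<lambda>k. measure M (H k) - measure M E) \<longlonglongrightarrow> 0"
        using muD Dmu by (rule_tac Lim_null_comparison[where g="\<lambda>k. measure M (D k)"]) (simp_all add: real_norm_def)
    qed
    have jH: "(\<lambda>k. j (H k)) \<longlonglongrightarrow> m"
    proof (rule tendsto_sandwich[where f="\<lambda>k. m" and h="\<lambda>k. m + 1 / real (Suc k)"])
      show "\<forall>\<^sub>F k in sequentially. m \<le> j (H k)" using mle HT by auto
      have "j (H k) \<le> m + 1 / real (Suc k)" for k
      proof -
        have "k \<le> r k" using r by (simp add: seq_suble)
        then have "1 / real (Suc (r k)) \<le> 1 / real (Suc k)" by (simp add: frac_le)
        then show ?thesis using G(2)[of "r k"] unfolding H_def by simp
      qed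
      then show "\<forall>\<^sub>F k in sequentially. j (H k) \<le> m + 1 / real (Suc k)" by auto
      show "(\<lambda>k. m) \<longlonglongrightarrow> m" by simp
      have "(\<lambda>k. m + inverse (real (Suc k))) \<longlonglongrightarrow> m + 0"
        by (intro tendsto_add tendsto_const LIMSEQ_inverse_real_of_nat)
      then show "(\<lambda>k. m + 1 / real (Suc k)) \<longlonglongrightarrow> m" by (simp add: inverse_eq_divide)
    qed
    define L where "L = m + \<kappa> * measure M E"
    have pH: "(\<lambda>k. enn2real (P (H k))) \<longlonglongrightarrow> L"
    proof -
      have "(\<lambda>k. j (H k) + \<kappa> * measure M (H k)) \<longlonglongrightarrow> L"
        unfolding L_def by (intro tendsto_add tendsto_mult tendsto_const jH muH)
      then show ?thesis unfolding j_def by simp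
    qed
    have L0: "0 \<le> L" by (rule LIMSEQ_le_const[OF pH]) (simp add: enn2real_nonneg)
    have "(\<lambda>k. ennreal (enn2real (P (H k)))) \<longlonglongrightarrow> ennreal L"
      using pH by (rule tendsto_ennrealI)
    then have PH: "(\<lambda>k. P (H k)) \<longlonglongrightarrow> ennreal L" using GP unfolding H_def by simp
    have "liminf (\<lambda>k. P (H k)) = ennreal L"
      using PH by (intro lim_imp_Liminf) simp_all
    moreover have "P E \<le> liminf (\<lambda>k. P (H k))"
      using p4 conv unfolding P4_def H_def by (simp add: comp_def)
    ultimately have PEL: "P E \<le> ennreal L" by simp
    then have PEt: "P E \<noteq> top" by (auto simp: top_unique)
    have "enn2real (P E) \<le> enn2real (ennreal L)" using PEL by (intro enn2real_mono) auto
    then have "enn2real (P E) \<le> L" using L0 by simp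
    then have jE: "j E \<le> m" unfolding j_def L_def by simp
    have ET: "E \<in> T" using Es Eae PEt unfolding T_def S_def by auto
    have "\<forall>F\<in>T. j E \<le> j F" using jE mle by (meson order_trans)
    then show ?thesis using crit[OF ET] by blast
  qed
qed

lemma h1_le:
  assumes "admissible_set M P \<Omega> E"
  shows "h1 M P \<Omega> \<le> enn2real (P E) / measure M E"
  unfolding h1_def using assms
  by (intro cInf_lower) (auto intro!: bdd_belowI[where m=0])

lemma pos_min:
  assumes Om: "\<Omega> \<in> sets M" "emeasure M \<Omega> < \<infinity>" and kp: "\<kappa> > 0"
    and p4: "P4 M P" and p5: "P5 M P"
    and C: "admissible_set M P \<Omega> C" and Cle: "enn2real (P C) - \<kappa> * measure M C \<le> 0"
  shows "\<exists>E. Jk_minimizer M P \<kappa> \<Omega> E \<and> emeasure M E > 0"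
proof -
  obtain E where E: "Jk_minimizer M P \<kappa> \<Omega> E" using exists_min[OF Om kp p4 p5] by blast
  show ?thesis
  proof (cases "emeasure M E > 0")
    case True then show ?thesis using E by blast
  next
    case False
    then have "emeasure M E = 0" by (simp add: zero_less_iff_neq_zero)
    then have "measure M E = 0" by (simp add: measure_def)
    then have JE: "Jk M P \<kappa> E = enn2ereal (P E)" unfolding Jk_def by (simp add: zero_ereal_def)
    have PC: "P C \<noteq> top" using C unfolding admissible_set_def by auto
    have "Jk M P \<kappa> C \<le> 0" using Cle by (simp add: Jk_fin[where P=P and F=C, OF PC] zero_ereal_def)
    also have "0 \<le> Jk M P \<kappa> E" unfolding JE by simp
    finally have CE: "Jk M P \<kappa> C \<le> Jk M P \<kappa> E" .
    have "Jk_minimizer M P \<kappa> \<Omega> C"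
      using C E CE unfolding Jk_minimizer_def admissible_set_def by (meson order_trans)
    then show ?thesis using C unfolding admissible_set_def by blast
  qed
qed

theorem theorem4p6:
  fixes M :: "'a measure" and P :: "'a set \<Rightarrow> ennreal" and \<Omega> :: "'a set" and \<kappa> :: real
  assumes "sigma_finite_measure M"
    and "proper_functional P"
    and "\<Omega> \<in> sets M" and "emeasure M \<Omega> < \<infinity>"
    and "\<kappa> > 0"
    and "P4 M P" and "P5 M P"
  shows "(\<exists>E. Jk_minimizer M P \<kappa> \<Omega> E) \<and>
    (P1 P \<longrightarrow>
      ((\<exists>E. Jk_minimizer M P \<kappa> \<Omega> E \<and> emeasure M E > 0) \<longrightarrow>
          one_admissible M P \<Omega> \<and> \<kappa> \<ge> h1 M P \<Omega>) \<and>
      (one_admissible M P \<Omega> \<and> \<kappa> > h1 M P \<Omega> \<longrightarrow>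
          (\<exists>E. Jk_minimizer M P \<kappa> \<Omega> E \<and> emeasure M E > 0)) \<and>
      ((\<exists>C. cheeger_set M P \<Omega> C) \<longrightarrow>
          ((\<exists>E. Jk_minimizer M P \<kappa> \<Omega> E \<and> emeasure M E > 0) \<longleftrightarrow> \<kappa> \<ge> h1 M P \<Omega>)))"
proof -
  note Om = assms(3,4) and kp = assms(5) and p45 = assms(6,7)
  have part1: "one_admissible M P \<Omega> \<and> \<kappa> \<ge> h1 M P \<Omega>"
    if p1: "P1 P" and E: "Jk_minimizer M P \<kappa> \<Omega> E" and Ep: "emeasure M E > 0" for E
  proof -
    have Es: "E \<in> sets M" and Eae: "ae_subset M E \<Omega>" using E unfolding Jk_minimizer_def by auto
    have "{} \<in> sets M" "ae_subset M {} \<Omega>" unfolding ae_subset_def by auto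
    then have "Jk M P \<kappa> E \<le> Jk M P \<kappa> {}" using E unfolding Jk_minimizer_def by blast
    also have "Jk M P \<kappa> {} = 0" using p1 enn2ereal_ennreal[of 0] unfolding Jk_def P1_def by simp
    finally have J0: "Jk M P \<kappa> E \<le> 0" .
    have PE: "P E \<noteq> top" using J0 Jk_inf[of P E M \<kappa>] by auto
    have Efin: "emeasure M E < \<infinity>" using ae_sub_le[OF Es Om(1) Eae] Om(2) by auto
    have adm: "admissible_set M P \<Omega> E" using Es Eae Ep Efin PE
      unfolding admissible_set_def by (simp add: less_top)
    have mu: "measure M E > 0" using Ep Efin unfolding measure_def
      by (simp add: enn2real_positive_iff less_top)
    have "enn2real (P E) - \<kappa> * measure M E \<le> 0" using J0 by (simp add: Jk_fin[where P=P and F=E, OF PE] zero_ereal_def)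
    then have "enn2real (P E) / measure M E \<le> \<kappa>" using mu by (simp add: divide_le_eq)
    then show ?thesis using h1_le[OF adm] adm unfolding one_admissible_def by auto
  qed
  have part2: "\<exists>E. Jk_minimizer M P \<kappa> \<Omega> E \<and> emeasure M E > 0"
    if a1: "one_admissible M P \<Omega>" and a2: "\<kappa> > h1 M P \<Omega>"
  proof -
    have ne: "{enn2real (P E) / measure M E | E. admissible_set M P \<Omega> E} \<noteq> {}"
      using a1 unfolding one_admissible_def by auto
    obtain F where F: "admissible_set M P \<Omega> F" "enn2real (P F) / measure M F < \<kappa>"
      using cInf_lessD[OF ne a2[unfolded h1_def]] by auto
    have mu: "measure M F > 0" using F(1) unfolding measure_def admissible_set_def
      by (simp add: enn2real_positive_iff less_top)
    have "enn2real (P F) - \<kappa> * measure M F \<le> 0" using F(2) mu by (simp add: divide_less_eq)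
    then show ?thesis using pos_min[OF Om kp p45 F(1)] by blast
  qed
  have part3: "\<exists>E. Jk_minimizer M P \<kappa> \<Omega> E \<and> emeasure M E > 0"
    if b1: "cheeger_set M P \<Omega> C" and b2: "\<kappa> \<ge> h1 M P \<Omega>" for C
  proof -
    have C: "admissible_set M P \<Omega> C" "enn2real (P C) / measure M C = h1 M P \<Omega>"
      using b1 unfolding cheeger_set_def by auto
    have mu: "measure M C > 0" using C(1) unfolding measure_def admissible_set_def
      by (simp add: enn2real_positive_iff less_top)
    have "enn2real (P C) / measure M C \<le> \<kappa>" using C(2) b2 by simp
    then have "enn2real (P C) - \<kappa> * measure M C \<le> 0" using mu by (simp add: divide_le_eq)
    then show ?thesis using pos_min[OF Om kp p45 C(1)] by blast
  qed
  show ?thesis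
    using exists_min[OF Om kp p45] part1 part2 part3 by blast
qed

end
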